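(* Let $\mathcal{H}=(V,\mathcal{A})$ be a multi-head HyTN in which every node of $V$ is the tail of at least one hyperarc, and let $G_{\mathcal{H}}$ be its associated mean payoff game. If every node of $G_{\mathcal{H}}$ is a winning start position for Player 1, then $\mathcal{H}$ is consistent.
   Context: A multi-head HyTN is a pair $\mathcal{H}=(V,\mathcal{A})$, $V$ a finite node set, $\mathcal{A}$ a finite set of hyperarcs $A=(t_A,H_A,w_A)$ with tail $t_A\in V$, nonempty head set $H_A\subseteq V\setminus\{t_A\}$ and weights $w_A(v)\in\mathbb{R}$ for $v\in H_A$. A scheduling $s:V\to\mathbb{R}$ is feasible if $s(t_A)\ge\min_{v\in H_A}\{s(v)-w_A(v)\}$ for all $A\in\mathcal{A}$; $\mathcal{H}$ is consistent if a feasible scheduling exists. A mean payoff game (MPG) is a finite directed graph with real arc weights whose node set is partitioned into $V_0$ (nodes of Player 0) and $V_1$ (nodes of Player 1), where every node has at least one outgoing arc. A play from a start node $v_0$ proceeds in moves: when the pebble is at $v_{t-1}\in V_p$, Player $p$ chooses an arc $e_t$ leaving $v_{t-1}$ and the pebble moves to its head $v_t$. The play ends at the first $t$ such that $v_t=v_{t'}$ for some $t'<t$; Player 0 wins if $\frac{1}{t-t'}\sum_{i=t'+1}^{t}w(e_i)<0$, otherwise Player 1 wins. A strategy for Player $p$ maps each history ending in a node of $V_p$ to an outgoing arc of that node. A node $s$ is a winning start position for Player 1 if Player 1 has a strategy such that every play starting at $s$ in which Player 1 follows it is won by Player 1. The associated game $G_{\mathcal{H}}$ has $V_0=V$, $V_1=\mathcal{A}$,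 and arc set $\{(t_A,A,0)\mid A\in\mathcal{A}\}\cup\{(A,h,w_A(h))\mid A\in\mathcal{A},h\in H_A\}$ (an arc $(x,y,w)$ goes from $x$ to $y$ with weight $w$). *)

theory Defs
  imports Complex_Main
begin

text \<open>A hyperarc is a triple (tail, head set, weights); the weight function is only
  relevant on the head set.\<close>
type_synonym 'v hyperarc = "'v \<times> 'v set \<times> ('v \<Rightarrow> real)"

definition tl_of :: "'v hyperarc \<Rightarrow> 'v" where "tl_of A = fst A"
definition hd_of :: "'v hyperarc \<Rightarrow> 'v set" where "hd_of A = fst (snd A)"
definition w_of :: "'v hyperarc \<Rightarrow> 'v \<Rightarrow> real" where "w_of A = snd (snd A)"

definition hytn :: "'v set \<Rightarrow> 'v hyperarc set \<Rightarrow> bool" where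
  "hytn V \<A> \<longleftrightarrow> finite V \<and> finite \<A> \<and>
     (\<forall>A\<in>\<A>. tl_of A \<in> V \<and> hd_of A \<noteq> {} \<and> hd_of A \<subseteq> V - {tl_of A})"

definition feasible_scheduling :: "'v set \<Rightarrow> 'v hyperarc set \<Rightarrow> ('v \<Rightarrow> real) \<Rightarrow> bool" where
  "feasible_scheduling V \<A> s \<longleftrightarrow>
     (\<forall>A\<in>\<A>. s (tl_of A) \<ge> Min ((\<lambda>v. s v - w_of A v) ` hd_of A))"

definition consistent :: "'v set \<Rightarrow> 'v hyperarc set \<Rightarrow> bool" where
  "consistent V \<A> \<longleftrightarrow> (\<exists>s. feasible_scheduling V \<A> s)"

text \<open>A game is given by a node set N, the set V0 \<subseteq> N of Player 0 nodes
  (Player 1 owns N - V0) and a set E of weighted arcs (x, y, w).\<close>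
type_synonym 'n arc = "'n \<times> 'n \<times> real"

definition src :: "'n arc \<Rightarrow> 'n" where "src e = fst e"
definition tgt :: "'n arc \<Rightarrow> 'n" where "tgt e = fst (snd e)"
definition wt :: "'n arc \<Rightarrow> real" where "wt e = snd (snd e)"

definition mpg :: "'n set \<Rightarrow> 'n set \<Rightarrow> 'n arc set \<Rightarrow> bool" where
  "mpg N V0 E \<longleftrightarrow> finite N \<and> finite E \<and> V0 \<subseteq> N \<and>
     (\<forall>e\<in>E. src e \<in> N \<and> tgt e \<in> N) \<and> (\<forall>v\<in>N. \<exists>e\<in>E. src e = v)"

definition pos :: "'n \<Rightarrow> 'n arc list \<Rightarrow> nat \<Rightarrow> 'n" where
  "pos s es i = (if i = 0 then s else tgt (es ! (i - 1)))"

definition is_walk :: "'n arc set \<Rightarrow> 'n \<Rightarrow> 'n arc list \<Rightarrow> bool" where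
  "is_walk E s es \<longleftrightarrow> (\<forall>i < length es. es ! i \<in> E \<and> src (es ! i) = pos s es i)"

text \<open>A complete play: a walk whose last node is the first repetition.\<close>
definition is_play :: "'n arc set \<Rightarrow> 'n \<Rightarrow> 'n arc list \<Rightarrow> bool" where
  "is_play E s es \<longleftrightarrow> is_walk E s es \<and> length es \<ge> 1 \<and>
     inj_on (pos s es) {..<length es} \<and>
     pos s es (length es) \<in> pos s es ` {..<length es}"

definition player1_wins :: "'n \<Rightarrow> 'n arc list \<Rightarrow> bool" where
  "player1_wins s es \<longleftrightarrow>
     (let t = length es; t' = (THE t'. t' < t \<and> pos s es t' = pos s es t)
      in (\<Sum>i\<in>{t'..<t}. wt (es ! i)) / real (t - t') \<ge> 0)"

definition strategy1 :: "'n set \<Rightarrow> 'n set \<Rightarrow> 'n arc set \<Rightarrow> 'n \<Rightarrow> ('n arc list \<Rightarrow> 'n arc) \<Rightarrow> bool" where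
  "strategy1 N V0 E s \<sigma> \<longleftrightarrow>
     (\<forall>h. is_walk E s h \<and> pos s h (length h) \<in> N - V0 \<longrightarrow>
          \<sigma> h \<in> E \<and> src (\<sigma> h) = pos s h (length h))"

definition follows1 :: "'n set \<Rightarrow> 'n set \<Rightarrow> 'n \<Rightarrow> ('n arc list \<Rightarrow> 'n arc) \<Rightarrow> 'n arc list \<Rightarrow> bool" where
  "follows1 N V0 s \<sigma> es \<longleftrightarrow>
     (\<forall>i < length es. pos s es i \<in> N - V0 \<longrightarrow> es ! i = \<sigma> (take i es))"

definition winning_start1 :: "'n set \<Rightarrow> 'n set \<Rightarrow> 'n arc set \<Rightarrow> 'n \<Rightarrow> bool" where
  "winning_start1 N V0 E s \<longleftrightarrow>
     (\<exists>\<sigma>. strategy1 N V0 E s \<sigma> \<and>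
        (\<forall>es. is_play E s es \<and> follows1 N V0 s \<sigma> es \<longrightarrow> player1_wins s es))"

definition game_nodes :: "'v set \<Rightarrow> 'v hyperarc set \<Rightarrow> ('v + 'v hyperarc) set" where
  "game_nodes V \<A> = Inl ` V \<union> Inr ` \<A>"

definition game_V0 :: "'v set \<Rightarrow> ('v + 'v hyperarc) set" where
  "game_V0 V = Inl ` V"

definition game_arcs :: "'v hyperarc set \<Rightarrow> ('v + 'v hyperarc) arc set" where
  "game_arcs \<A> = {(Inl (tl_of A), Inr A, 0) | A. A \<in> \<A>} \<union>
                  {(Inr A, Inl h, w_of A h) | A h. A \<in> \<A> \<and> h \<in> hd_of A}"

end

theory Submission
  imports Defs
begin

lemma pos_snoc: "i \<le> length p \<Longrightarrow> pos x (p @ [e]) i = pos x p i"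
  unfolding pos_def by (auto simp: nth_append)

lemma pos_snoc_last: "pos x (p @ [e]) (Suc (length p)) = tgt e"
  by (simp add: pos_def)

lemma pos_take: "i \<le> j \<Longrightarrow> j \<le> length p \<Longrightarrow> pos x (take j p) i = pos x p i"
  unfolding pos_def by auto

lemma walk_snoc:
  assumes "is_walk E x p" "e \<in> E" "src e = pos x p (length p)"
  shows "is_walk E x (p @ [e])"
  unfolding is_walk_def
proof (intro allI impI)
  fix i assume "i < length (p @ [e])"
  then have "i < length p \<or> i = length p" by auto
  then show "(p @ [e]) ! i \<in> E \<and> src ((p @ [e]) ! i) = pos x (p @ [e]) i"
  proof
    assume i: "i < length p"
    then show ?thesis using assms(1) pos_snoc[of i p x e] by (auto simp: is_walk_def nth_append)
  next
    assume i: "i = length p"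
    then show ?thesis using assms(2,3) pos_snoc[of i p x e] by (auto simp: nth_append)
  qed
qed

lemma walk_take:
  assumes "is_walk E x p" "j \<le> length p"
  shows "is_walk E x (take j p)"
  unfolding is_walk_def
proof (intro allI impI)
  fix i assume i: "i < length (take j p)"
  then have "i < j" "i < length p" using assms by auto
  then show "take j p ! i \<in> E \<and> src (take j p ! i) = pos x (take j p) i"
    using assms pos_take[of i j p x] by (auto simp: is_walk_def)
qed

lemma follows_snoc:
  assumes "follows1 N V0 x \<sigma> p" "pos x p (length p) \<in> N - V0 \<longrightarrow> e = \<sigma> p"
  shows "follows1 N V0 x \<sigma> (p @ [e])"
  unfolding follows1_def
proof (intro allI impI)
  fix i assume i: "i < length (p @ [e])" and n: "pos x (p @ [e]) i \<in> N - V0"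
  then have "i < length p \<or> i = length p" by auto
  then show "(p @ [e]) ! i = \<sigma> (take i (p @ [e]))"
  proof
    assume i: "i < length p"
    then show ?thesis using assms(1) n pos_snoc[of i p x e] by (auto simp: follows1_def nth_append)
  next
    assume i: "i = length p"
    then show ?thesis using assms(2) n pos_snoc[of i p x e] by (auto simp: nth_append)
  qed
qed

lemma follows_take:
  assumes "follows1 N V0 x \<sigma> p" "j \<le> length p"
  shows "follows1 N V0 x \<sigma> (take j p)"
  unfolding follows1_def
proof (intro allI impI)
  fix i assume i: "i < length (take j p)" and n: "pos x (take j p) i \<in> N - V0"
  then have "i < j" "i < length p" using assms by auto
  then show "take j p ! i = \<sigma> (take i (take j p))"
    using assms n pos_take[of i j p x] by (auto simp: follows1_def min_def)
qed

definition W :: "'n arc list \<Rightarrow> real" where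
  "W p = (\<Sum>i<length p. wt (p ! i))"

definition stack where
  "stack N V0 E x \<sigma> p \<longleftrightarrow> is_walk E x p \<and> follows1 N V0 x \<sigma> p \<and> inj_on (pos x p) {..length p}"

lemma extend:
  assumes st: "stack N V0 E x \<sigma> p" and eE: "e \<in> E" and src: "src e = pos x p (length p)"
    and fol: "pos x p (length p) \<in> N - V0 \<longrightarrow> e = \<sigma> p"
    and win: "\<forall>es. is_play E x es \<and> follows1 N V0 x \<sigma> es \<longrightarrow> player1_wins x es"
  shows "\<exists>p'. stack N V0 E x \<sigma> p' \<and> pos x p' (length p') = tgt e \<and> W p' \<le> W p + wt e"
proof -
  define q where "q = p @ [e]"
  have lq: "length q = Suc (length p)" by (simp add: q_def)
  have wq: "is_walk E x q" using walk_snoc[of E x p e] st eE src by (simp add: stack_def q_def)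
  have fq: "follows1 N V0 x \<sigma> q" using follows_snoc[of N V0 x \<sigma> p e] st fol by (simp add: stack_def q_def)
  have posq: "\<And>i. i \<le> length p \<Longrightarrow> pos x q i = pos x p i" by (simp add: q_def pos_snoc)
  have posl: "pos x q (length q) = tgt e" by (simp add: q_def lq pos_snoc_last)
  have Wq: "W q = W p + wt e" by (simp add: W_def q_def nth_append)
  have injp: "inj_on (pos x p) {..length p}" using st by (simp add: stack_def)
  have injq0: "inj_on (pos x q) {..length p}"
    using injp posq by (metis atMost_iff inj_on_cong)
  show ?thesis
  proof (cases "tgt e \<in> pos x p ` {..length p}")
    case False
    have "{..length q} = insert (length q) {..length p}" using lq by auto
    moreover have "pos x q (length q) \<notin> pos x q ` {..length p}"
      using False posq posl by auto
    ultimately have "inj_on (pos x q) {..length q}" using injq0 lq by simp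
    then have "stack N V0 E x \<sigma> q" using wq fq by (simp add: stack_def)
    then show ?thesis using posl Wq by auto
  next
    case True
    then obtain j where j: "j \<le> length p" "pos x p j = tgt e" by auto
    have "{..<length q} = {..length p}" using lq by auto
    then have play: "is_play E x q"
      using wq injq0 posl j posq lq unfolding is_play_def by (auto intro!: image_eqI[of _ _ j])
    then have pw: "player1_wins x q" using win fq by blast
    have the: "(THE t'. t' < length q \<and> pos x q t' = pos x q (length q)) = j"
    proof (rule the_equality)
      show "j < length q \<and> pos x q j = pos x q (length q)" using j lq posq posl by auto
    next
      fix t' assume t': "t' < length q \<and> pos x q t' = pos x q (length q)"
      then have "t' \<le> length p" using lq by auto
      then show "t' = j" using t' injp j posq posl lq inj_onD[OF injp, of t' j] by auto
    qed
    have "(\<Sum>i\<in>{j..<length q}. wt (q ! i)) / real (length q - j) \<ge> 0"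
      using pw the unfolding player1_wins_def Let_def by simp
    moreover have "real (length q - j) > 0" using j lq by auto
    ultimately have S: "(\<Sum>i\<in>{j..<length q}. wt (q ! i)) \<ge> 0"
      by (simp add: zero_le_divide_iff)
    have split: "W q = (\<Sum>i<j. wt (q ! i)) + (\<Sum>i\<in>{j..<length q}. wt (q ! i))"
      unfolding W_def using j lq
      by (metis le_SucI lessThan_atLeast0 sum.atLeastLessThan_concat zero_le)
    have Wt: "W (take j p) = (\<Sum>i<j. wt (q ! i))"
      unfolding W_def using j by (auto simp: q_def nth_append min_def intro!: sum.cong)
    have "inj_on (pos x p) {..j}" using inj_on_subset[OF injp, of "{..j}"] j by auto
    then have "inj_on (pos x (take j p)) {..j}"
      using j pos_take[of _ j p x] by (metis atMost_iff inj_on_cong)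
    then have "stack N V0 E x \<sigma> (take j p)"
      using st j walk_take[of E x p j] follows_take[of N V0 x \<sigma> p j] unfolding stack_def
      by (auto simp: min_def)
    moreover have "pos x (take j p) (length (take j p)) = tgt e"
      using j pos_take[of j j p x] by (simp add: min_def)
    ultimately show ?thesis using split Wt S Wq by (intro exI[of _ "take j p"]) auto
  qed
qed


lemma finite_arcs: "hytn V \<A> \<Longrightarrow> finite (game_arcs \<A>)"
proof -
  assume h: "hytn V \<A>"
  have "game_arcs \<A> \<subseteq> (\<lambda>A. (Inl (tl_of A), Inr A, 0)) ` \<A> \<union>
      (\<lambda>(A,h). (Inr A, Inl h, w_of A h)) ` (\<A> \<times> V)"
  proof
    fix e assume "e \<in> game_arcs \<A>"
    then consider (a) A where "A \<in> \<A>" "e = (Inl (tl_of A), Inr A, 0)"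
      | (b) A k where "A \<in> \<A>" "k \<in> hd_of A" "e = (Inr A, Inl k, w_of A k)"
      unfolding game_arcs_def by blast
    then show "e \<in> (\<lambda>A. (Inl (tl_of A), Inr A, 0)) ` \<A> \<union>
      (\<lambda>(A,h). (Inr A, Inl h, w_of A h)) ` (\<A> \<times> V)"
    proof cases
      case a then show ?thesis by blast
    next
      case b
      then have "k \<in> V" using h unfolding hytn_def by blast
      then have "e = (\<lambda>(A,h). (Inr A, Inl h, w_of A h)) (A, k)" "(A,k) \<in> \<A> \<times> V"
        using b by auto
      then show ?thesis by blast
    qed
  qed
  moreover have "finite (\<A> \<times> V)" using h by (simp add: hytn_def)
  ultimately show ?thesis using h by (auto simp: hytn_def intro: finite_subset)
qed

lemma finite_nodes: "hytn V \<A> \<Longrightarrow> finite (game_nodes V \<A>)"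
  by (simp add: hytn_def game_nodes_def)

lemma tgt_in: assumes h: "hytn V \<A>" and e: "e \<in> game_arcs \<A>" shows "tgt e \<in> game_nodes V \<A>"
proof -
  from e consider (a) A where "A \<in> \<A>" "e = (Inl (tl_of A), Inr A, 0)"
      | (b) A k where "A \<in> \<A>" "k \<in> hd_of A" "e = (Inr A, Inl k, w_of A k)"
      unfolding game_arcs_def by blast
  then show ?thesis
  proof cases
    case a then show ?thesis by (simp add: tgt_def game_nodes_def)
  next
    case b
    then have "k \<in> V" using h unfolding hytn_def by blast
    then show ?thesis using b by (simp add: tgt_def game_nodes_def)
  qed
qed

lemma arc_from_Inr: "e \<in> game_arcs \<A> \<Longrightarrow> src e = Inr A \<Longrightarrow>
   \<exists>h\<in>hd_of A. e = (Inr A, Inl h, w_of A h)"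
  unfolding game_arcs_def src_def by auto

definition Mw :: "'v hyperarc set \<Rightarrow> real" where
  "Mw \<A> = Max (insert 0 ((\<lambda>e. \<bar>wt e\<bar>) ` game_arcs \<A>))"

definition Bd :: "'v set \<Rightarrow> 'v hyperarc set \<Rightarrow> real" where
  "Bd V \<A> = real (card (game_nodes V \<A>)) * Mw \<A>"

lemma Mw_ge: "hytn V \<A> \<Longrightarrow> e \<in> game_arcs \<A> \<Longrightarrow> \<bar>wt e\<bar> \<le> Mw \<A>"
  unfolding Mw_def using finite_arcs by (intro Max_ge) auto

lemma Mw_nonneg: "hytn V \<A> \<Longrightarrow> 0 \<le> Mw \<A>"
  unfolding Mw_def using finite_arcs by (intro Max_ge) auto

definition Gop :: "'v hyperarc set \<Rightarrow> ('v \<Rightarrow> real) \<Rightarrow> 'v \<Rightarrow> real" where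
  "Gop \<A> s v = Max (insert (s v) ((\<lambda>A. Min ((\<lambda>h. s h - w_of A h) ` hd_of A)) ` {A\<in>\<A>. tl_of A = v}))"

definition sk :: "'v hyperarc set \<Rightarrow> nat \<Rightarrow> 'v \<Rightarrow> real" where
  "sk \<A> k = (Gop \<A> ^^ k) (\<lambda>_. 0)"

lemma sk_0: "sk \<A> 0 v = 0" by (simp add: sk_def)
lemma sk_Suc: "sk \<A> (Suc k) = Gop \<A> (sk \<A> k)" by (simp add: sk_def)

lemma Gop_ge: "hytn V \<A> \<Longrightarrow> s v \<le> Gop \<A> s v"
  unfolding Gop_def hytn_def by (intro Max_ge) auto

lemma Gop_ge2: "hytn V \<A> \<Longrightarrow> A \<in> \<A> \<Longrightarrow> Min ((\<lambda>h. s h - w_of A h) ` hd_of A) \<le> Gop \<A> s (tl_of A)"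
  unfolding Gop_def hytn_def by (intro Max_ge) auto

lemma Gop_le:
  assumes "hytn V \<A>" "s v \<le> c" "\<And>A. A \<in> \<A> \<Longrightarrow> tl_of A = v \<Longrightarrow> Min ((\<lambda>h. s h - w_of A h) ` hd_of A) \<le> c"
  shows "Gop \<A> s v \<le> c"
  unfolding Gop_def using assms by (subst Max_le_iff) (auto simp: hytn_def)

locale setting =
  fixes V :: "'v set" and \<A> :: "'v hyperarc set" and x and \<sigma>
  assumes hytn: "hytn V \<A>" and xN: "x \<in> game_nodes V \<A>"
    and strat: "strategy1 (game_nodes V \<A>) (game_V0 V) (game_arcs \<A>) x \<sigma>"
    and win: "\<forall>es. is_play (game_arcs \<A>) x es \<and> follows1 (game_nodes V \<A>) (game_V0 V) x \<sigma> es
                 \<longrightarrow> player1_wins x es"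
begin

abbreviation "St p \<equiv> stack (game_nodes V \<A>) (game_V0 V) (game_arcs \<A>) x \<sigma> p"

lemma pos_in: "is_walk (game_arcs \<A>) x p \<Longrightarrow> i \<le> length p \<Longrightarrow> pos x p i \<in> game_nodes V \<A>"
  using xN tgt_in[OF hytn] unfolding pos_def is_walk_def by auto

lemma W_lb: assumes "St p" shows "- Bd V \<A> \<le> W p"
proof -
  have w: "is_walk (game_arcs \<A>) x p" and inj: "inj_on (pos x p) {..length p}"
    using assms by (auto simp: stack_def)
  have "card {..length p} \<le> card (game_nodes V \<A>)"
    using card_inj_on_le[OF inj _ finite_nodes[OF hytn]] pos_in[OF w] by auto
  then have len: "length p \<le> card (game_nodes V \<A>)" by simp
  have "(\<Sum>i<length p. - Mw \<A>) \<le> W p"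
    unfolding W_def
  proof (rule sum_mono)
    fix i assume "i \<in> {..<length p}"
    then have "p ! i \<in> game_arcs \<A>" using w by (auto simp: is_walk_def)
    then show "- Mw \<A> \<le> wt (p ! i)" using Mw_ge[OF hytn, of "p ! i"] by linarith
  qed
  moreover have "- Bd V \<A> \<le> (\<Sum>i<length p. - Mw \<A>)"
    using len Mw_nonneg[OF hytn] unfolding Bd_def by (simp add: mult_right_mono)
  ultimately show ?thesis by linarith
qed

lemma R: "St p \<Longrightarrow> pos x p (length p) = Inl v \<Longrightarrow> sk \<A> k v \<le> Bd V \<A> + W p"
proof (induction k arbitrary: p v)
  case 0
  then show ?case using W_lb[of p] by (simp add: sk_0)
next
  case (Suc k)
  show ?case unfolding sk_Suc
  proof (rule Gop_le[OF hytn])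
    show "sk \<A> k v \<le> Bd V \<A> + W p" using Suc by blast
  next
    fix A assume A: "A \<in> \<A>" "tl_of A = v"
    define e :: "('v + 'v hyperarc) arc" where "e = (Inl v, Inr A, 0::real)"
    have eE: "e \<in> game_arcs \<A>" using A unfolding e_def game_arcs_def by blast
    have "v \<in> V" using A hytn unfolding hytn_def by auto
    then have "pos x p (length p) \<notin> game_nodes V \<A> - game_V0 V"
      using Suc.prems by (auto simp: game_V0_def)
    then obtain p' where p': "St p'" "pos x p' (length p') = Inr A" "W p' \<le> W p"
      using extend[OF Suc.prems(1) eE _ _ win] Suc.prems(2)
      by (auto simp: e_def src_def tgt_def wt_def)
    have "Inr A \<in> game_nodes V \<A> - game_V0 V" using A by (auto simp: game_nodes_def game_V0_def)
    then have e2: "\<sigma> p' \<in> game_arcs \<A>" "src (\<sigma> p') = Inr A"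
      using strat p' unfolding strategy1_def stack_def by auto
    then obtain h where h: "h \<in> hd_of A" "\<sigma> p' = (Inr A, Inl h, w_of A h)"
      using arc_from_Inr by blast
    obtain p'' where p'': "St p''" "pos x p'' (length p'') = Inl h" "W p'' \<le> W p' + w_of A h"
      using extend[OF p'(1) e2(1) _ _ win] e2(2) p'(2) h(2)
      by (auto simp: tgt_def wt_def)
    have "sk \<A> k h \<le> Bd V \<A> + W p''" using Suc.IH p'' by blast
    moreover have "Min ((\<lambda>h. sk \<A> k h - w_of A h) ` hd_of A) \<le> sk \<A> k h - w_of A h"
      using h(1) A hytn unfolding hytn_def by (intro Min_le) (auto intro: finite_subset)
    ultimately show "Min ((\<lambda>h. sk \<A> k h - w_of A h) ` hd_of A) \<le> Bd V \<A> + W p"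
      using p' p'' by linarith
  qed
qed

lemma bound: "x = Inl v \<Longrightarrow> sk \<A> k v \<le> Bd V \<A>"
  using R[of "[]" v k]
  by (simp add: stack_def is_walk_def follows1_def W_def pos_def)

end

lemma finite_common:
  assumes "finite H" "\<forall>h\<in>H. \<exists>k::nat. P h k" "\<And>h k k'. P h k \<Longrightarrow> k \<le> k' \<Longrightarrow> P h k'"
  shows "\<exists>K. \<forall>h\<in>H. P h K"
  using assms(1,2)
proof (induction H rule: finite_induct)
  case empty then show ?case by auto
next
  case (insert a F)
  then obtain K where K: "\<forall>h\<in>F. P h K" by auto
  obtain k where k: "P a k" using insert by auto
  show ?case using K k assms(3)[of _ _ "max K k"] by (intro exI[of _ "max K k"]) auto
qed

theorem mainTheorem9:
  fixes V :: "'v set" and \<A> :: "'v hyperarc set"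
  assumes "hytn V \<A>"
    and "\<forall>v\<in>V. \<exists>A\<in>\<A>. tl_of A = v"
    and "\<forall>x\<in>game_nodes V \<A>. winning_start1 (game_nodes V \<A>) (game_V0 V) (game_arcs \<A>) x"
  shows "consistent V \<A>"
proof -
  have hy: "hytn V \<A>" by fact
  have bd: "sk \<A> k v \<le> Bd V \<A>" if "v \<in> V" for k v
  proof -
    have "Inl v \<in> game_nodes V \<A>" using that by (simp add: game_nodes_def)
    then obtain \<sigma> where "strategy1 (game_nodes V \<A>) (game_V0 V) (game_arcs \<A>) (Inl v) \<sigma>"
      "\<forall>es. is_play (game_arcs \<A>) (Inl v) es \<and> follows1 (game_nodes V \<A>) (game_V0 V) (Inl v) \<sigma> es
                 \<longrightarrow> player1_wins (Inl v) es"
      using assms(3) unfolding winning_start1_def by blast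
    then interpret setting V \<A> "Inl v" \<sigma>
      using hy \<open>Inl v \<in> game_nodes V \<A>\<close> by unfold_locales auto
    show ?thesis using bound by simp
  qed
  have mono: "sk \<A> k v \<le> sk \<A> k' v" if "k \<le> k'" for k k' v
    using that
  proof (induction k' rule: dec_induct)
    case base then show ?case by simp
  next
    case (step n) then show ?case using Gop_ge[OF hy, of "sk \<A> n" v] by (simp add: sk_Suc)
  qed
  define s where "s v = (SUP k. sk \<A> k v)" for v
  have bdd: "bdd_above (range (\<lambda>k. sk \<A> k v))" if "v \<in> V" for v
    using bd[OF that] by (intro bdd_aboveI2)
  have sup_ge: "sk \<A> k v \<le> s v" if "v \<in> V" for k v
    unfolding s_def using bdd[OF that] by (intro cSUP_upper) auto
  have "feasible_scheduling V \<A> s"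
    unfolding feasible_scheduling_def
  proof
    fix A assume A: "A \<in> \<A>"
    let ?t = "tl_of A" and ?H = "hd_of A"
    have tV: "?t \<in> V" and HV: "?H \<subseteq> V" and Hne: "?H \<noteq> {}" and fH: "finite ?H"
      using A hy unfolding hytn_def by (auto intro: finite_subset)
    have "\<exists>h\<in>?H. \<forall>k. sk \<A> k h - w_of A h \<le> s ?t"
    proof (rule ccontr)
      assume "\<not> ?thesis"
      then have "\<forall>h\<in>?H. \<exists>k. s ?t < sk \<A> k h - w_of A h" by (auto simp: not_le)
      then obtain K where K: "\<forall>h\<in>?H. s ?t < sk \<A> K h - w_of A h"
        using finite_common[OF fH, of "\<lambda>h k. s ?t < sk \<A> k h - w_of A h"] mono
        by (smt (verit))
      have "Min ((\<lambda>h. sk \<A> K h - w_of A h) ` ?H) \<in> (\<lambda>h. sk \<A> K h - w_of A h) ` ?H"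
        using fH Hne by (intro Min_in) auto
      then obtain h where h: "h \<in> ?H" "Min ((\<lambda>h. sk \<A> K h - w_of A h) ` ?H) = sk \<A> K h - w_of A h"
        by auto
      have "Min ((\<lambda>h. sk \<A> K h - w_of A h) ` ?H) \<le> sk \<A> (Suc K) ?t"
        using Gop_ge2[OF hy A] by (simp add: sk_Suc)
      then show False using h K sup_ge[OF tV, of "Suc K"] by force
    qed
    then obtain h where h: "h \<in> ?H" "\<forall>k. sk \<A> k h - w_of A h \<le> s ?t" by auto
    have "s h \<le> s ?t + w_of A h"
      unfolding s_def[of h] using h(2) by (intro cSUP_least) (auto simp: algebra_simps)
    moreover have "Min ((\<lambda>v. s v - w_of A v) ` ?H) \<le> s h - w_of A h"
      using fH h(1) by (intro Min_le) auto
    ultimately show "Min ((\<lambda>v. s v - w_of A v) ` ?H) \<le> s ?t" by linarith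
  qed
  then show ?thesis unfolding consistent_def by blast
qed

end
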